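(* Suppose the arms are played in a round-robin manner as described in the context. Then the event $G$ holds with probability at least $1-3/T^2$.
   Context: Delay-as-payoff bandit: $K$ arms, horizon $T$, maximum delay $D\in\mathbb{N}$. Arm $i$ has an unknown distribution $\mathcal{D}_i$ on $\{0,1,\dots,D\}$; at each step $t$ the agent picks $i_t$, a delay $d_t\sim\mathcal{D}_{i_t}$ is drawn independently and revealed only at time $t+d_t$, and the payoff is $d_t/D$. Let $\mu(i)=\mathbb{E}_{X\sim\mathcal{D}_i}[X/D]$ and $d(i)=D\mu(i)$. Playing in a round-robin manner means: time is divided into rounds, in each round every arm of the current active set is played exactly once, and the active set can only shrink over time; $R_t$ denotes the minimum size of the active set used up to time $t$. Notation: $n_t(i)$ is the number of steps $s\le t$ with $i_s=i$; $\hat\mu_t(i)=\frac{1}{n_t(i)}\sum_{s\le t,\,i_s=i}d_s/D$ (empirical mean payoff of all plays of $i$ up to $t$, possibly not yet observed); $m_t(i)=|\{s\le t: i_s=i,\ s+d_s\ge t\}|$. Event $G$: for every $t\in[T]$ and $i\in[K]$, $m_t(i)\le\frac{2d(i)}{R_t}+16\log T+2$ and $|\mu(i)-\hat\mu_t(i)|\le\sqrt{2\log T/n_t(i)}$. *)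

theory Defs
  imports "HOL-Probability.Probability"
begin

text \<open>Outcome space ("stack of delays"): w (i, k) is the delay of the k-th play (k = 0, 1, ...)
  of arm i.  Arms are 0..K-1, time steps are 1..T.  A policy is a function
  arm :: outcome => time => arm.\<close>

type_synonym outcome = "nat \<times> nat \<Rightarrow> nat"

definition delay_space :: "nat \<Rightarrow> nat \<Rightarrow> (nat \<Rightarrow> nat pmf) \<Rightarrow> outcome pmf" where
  "delay_space K T Dd = Pi_pmf ({..<K} \<times> {..<T}) 0 (\<lambda>(i,k). Dd i)"

definition cnt :: "(outcome \<Rightarrow> nat \<Rightarrow> nat) \<Rightarrow> outcome \<Rightarrow> nat \<Rightarrow> nat \<Rightarrow> nat" where
  "cnt arm w t i = card {s \<in> {1..t}. arm w s = i}"

text \<open>d_s: the delay drawn at step s (the next unused sample of the chosen arm).\<close>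
definition dly :: "(outcome \<Rightarrow> nat \<Rightarrow> nat) \<Rightarrow> outcome \<Rightarrow> nat \<Rightarrow> nat" where
  "dly arm w s = w (arm w s, cnt arm w (s - 1) (arm w s))"

text \<open>Two outcomes are indistinguishable to the agent before choosing at time t:
  same arms played at all s < t, and same revealed feedback (delay of s revealed at s + d_s).\<close>
definition hist_eq :: "(outcome \<Rightarrow> nat \<Rightarrow> nat) \<Rightarrow> nat \<Rightarrow> outcome \<Rightarrow> outcome \<Rightarrow> bool" where
  "hist_eq arm t w w' \<longleftrightarrow> (\<forall>s\<in>{1..<t}. arm w s = arm w' s \<and>
      (s + dly arm w s < t \<longleftrightarrow> s + dly arm w' s < t) \<and>
      (s + dly arm w s < t \<longrightarrow> dly arm w s = dly arm w' s))"

text \<open>The arm choices and the active sets are non-anticipating (functions of the observed history).\<close>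
definition round_robin ::
  "nat \<Rightarrow> nat \<Rightarrow> (outcome \<Rightarrow> nat \<Rightarrow> nat) \<Rightarrow> (outcome \<Rightarrow> nat \<Rightarrow> nat set) \<Rightarrow> (outcome \<Rightarrow> nat \<Rightarrow> nat) \<Rightarrow> bool"
  where
  "round_robin K T arm act bnd \<longleftrightarrow>
     (\<forall>w. bnd w 0 = 0 \<and> act w 0 \<subseteq> {..<K} \<and>
        (\<forall>r. act w r \<noteq> {} \<and> act w (Suc r) \<subseteq> act w r \<and> bnd w (Suc r) = bnd w r + card (act w r)) \<and>
        (\<forall>r. \<forall>t\<in>{bnd w r<..bnd w (Suc r)}. t \<le> T \<longrightarrow> arm w t \<in> act w r) \<and>
        (\<forall>r. inj_on (arm w) ({bnd w r<..bnd w (Suc r)} \<inter> {..T}))) \<and>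
     (\<forall>t\<in>{1..T}. \<forall>w w'. hist_eq arm t w w' \<longrightarrow> arm w t = arm w' t) \<and>
     (\<forall>r w w'. bnd w r < T \<longrightarrow> hist_eq arm (bnd w r + 1) w w' \<longrightarrow> act w r = act w' r)"

definition Rmin :: "(outcome \<Rightarrow> nat \<Rightarrow> nat set) \<Rightarrow> (outcome \<Rightarrow> nat \<Rightarrow> nat) \<Rightarrow> outcome \<Rightarrow> nat \<Rightarrow> nat" where
  "Rmin act bnd w t = Min ((\<lambda>r. card (act w r)) ` {r. bnd w r < t})"

definition mu :: "nat \<Rightarrow> (nat \<Rightarrow> nat pmf) \<Rightarrow> nat \<Rightarrow> real" where
  "mu D Dd i = measure_pmf.expectation (Dd i) (\<lambda>x. real x / real D)"

definition dmean :: "nat \<Rightarrow> (nat \<Rightarrow> nat pmf) \<Rightarrow> nat \<Rightarrow> real" where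
  "dmean D Dd i = real D * mu D Dd i"

text \<open>Empirical mean payoff of all plays of i up to t (observed or not).\<close>
definition muhat :: "nat \<Rightarrow> (outcome \<Rightarrow> nat \<Rightarrow> nat) \<Rightarrow> outcome \<Rightarrow> nat \<Rightarrow> nat \<Rightarrow> real" where
  "muhat D arm w t i =
     (\<Sum>s\<in>{s \<in> {1..t}. arm w s = i}. real (dly arm w s) / real D) / real (cnt arm w t i)"

definition mcnt :: "(outcome \<Rightarrow> nat \<Rightarrow> nat) \<Rightarrow> outcome \<Rightarrow> nat \<Rightarrow> nat \<Rightarrow> nat" where
  "mcnt arm w t i = card {s \<in> {1..t}. arm w s = i \<and> s + dly arm w s \<ge> t}"

text \<open>The good event G (the concentration bound is only required when n_t(i) > 0,
  the bound being vacuous/infinite otherwise).\<close>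
definition good_event ::
  "nat \<Rightarrow> nat \<Rightarrow> nat \<Rightarrow> (nat \<Rightarrow> nat pmf) \<Rightarrow> (outcome \<Rightarrow> nat \<Rightarrow> nat) \<Rightarrow> (outcome \<Rightarrow> nat \<Rightarrow> nat set)
     \<Rightarrow> (outcome \<Rightarrow> nat \<Rightarrow> nat) \<Rightarrow> outcome set" where
  "good_event K T D Dd arm act bnd =
     {w. \<forall>t\<in>{1..T}. \<forall>i<K.
        real (mcnt arm w t i) \<le> 2 * dmean D Dd i / real (Rmin act bnd w t) + 16 * ln (real T) + 2 \<and>
        (cnt arm w t i > 0 \<longrightarrow>
           \<bar>mu D Dd i - muhat D arm w t i\<bar> \<le> sqrt (2 * ln (real T) / real (cnt arm w t i)))}"

end

theory Submission
  imports Defs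
begin

definition rnd :: "(outcome \<Rightarrow> nat \<Rightarrow> nat) \<Rightarrow> outcome \<Rightarrow> nat \<Rightarrow> nat" where
  "rnd bnd w s = (LEAST r. s \<le> bnd w (Suc r))"

context
  fixes K T :: nat and arm :: "outcome \<Rightarrow> nat \<Rightarrow> nat"
    and act :: "outcome \<Rightarrow> nat \<Rightarrow> nat set" and bnd :: "outcome \<Rightarrow> nat \<Rightarrow> nat"
  assumes rr: "round_robin K T arm act bnd" and T1: "T \<ge> 1"
begin

lemma rr_bnd0: "bnd w 0 = 0" using rr unfolding round_robin_def by blast
lemma rr_act0: "act w 0 \<subseteq> {..<K}" using rr unfolding round_robin_def by blast
lemma rr_ne: "act w r \<noteq> {}" using rr unfolding round_robin_def by blast
lemma rr_sub: "act w (Suc r) \<subseteq> act w r" using rr unfolding round_robin_def by blast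
lemma rr_bndS: "bnd w (Suc r) = bnd w r + card (act w r)" using rr unfolding round_robin_def by blast
lemma rr_arm: "t \<in> {bnd w r<..bnd w (Suc r)} \<Longrightarrow> t \<le> T \<Longrightarrow> arm w t \<in> act w r"
  using rr unfolding round_robin_def by blast
lemma rr_inj: "inj_on (arm w) ({bnd w r<..bnd w (Suc r)} \<inter> {..T})"
  using rr unfolding round_robin_def by blast

lemma act0_const: "act w 0 = act w' 0"
proof -
  have "bnd w 0 < T" using T1 rr_bnd0 by simp
  moreover have "hist_eq arm (bnd w 0 + 1) w w'" unfolding hist_eq_def rr_bnd0 by simp
  ultimately show ?thesis using rr unfolding round_robin_def by blast
qed

lemma act_mono: "j \<le> j' \<Longrightarrow> act w j' \<subseteq> act w j"
proof (induction j' rule: dec_induct)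
  case (step n) then show ?case using rr_sub by blast
qed simp

lemma act_fin: "finite (act w j)"
  using act_mono[of 0 j w] rr_act0[of w] by (meson finite_lessThan finite_subset le0 order_trans)

lemma card_act: "card (act w j) \<ge> 1"
  using act_fin rr_ne by (simp add: Suc_leI card_gt_0_iff)

lemma bnd_Suc_gt: "bnd w r < bnd w (Suc r)"
  using rr_bndS card_act by (metis add_diff_cancel_left' diff_is_0_eq not_less not_one_le_zero)

lemma bnd_strict: "strict_mono (bnd w)"
  by (intro strict_monoI_Suc bnd_Suc_gt)

lemma bnd_mono: "r \<le> r' \<Longrightarrow> bnd w r \<le> bnd w r'"
  using bnd_strict strict_mono_less_eq by blast

lemma bnd_ge: "r \<le> bnd w r"
  using bnd_strict strict_mono_imp_increasing by blast

lemma bnd_lower: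
  assumes "r \<le> r'" and "\<And>j. r \<le> j \<Longrightarrow> j < r' \<Longrightarrow> R \<le> card (act w j)"
  shows "bnd w r + (r' - r) * R \<le> bnd w r'"
  using assms
proof (induction r' rule: dec_induct)
  case (step n)
  have "bnd w r + (n - r) * R \<le> bnd w n" using step by simp
  moreover have "R \<le> card (act w n)" using step by simp
  ultimately show ?case using rr_bndS[of w n] step(1) by (simp add: Suc_diff_le)
qed simp

lemma rnd_props:
  assumes "s \<ge> 1"
  shows "bnd w (rnd bnd w s) < s \<and> s \<le> bnd w (Suc (rnd bnd w s))"
proof -
  have ex: "s \<le> bnd w (Suc s)" using bnd_ge[of "Suc s" w] by simp
  have a: "s \<le> bnd w (Suc (rnd bnd w s))"
    unfolding rnd_def by (rule LeastI[of _ s]) (rule ex)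
  have b: "bnd w (rnd bnd w s) < s"
  proof (cases "rnd bnd w s")
    case 0 then show ?thesis using assms rr_bnd0 by simp
  next
    case (Suc q)
    have "\<not> s \<le> bnd w (Suc q)"
    proof
      assume "s \<le> bnd w (Suc q)"
      then have "rnd bnd w s \<le> q" unfolding rnd_def by (rule Least_le)
      then show False using Suc by simp
    qed
    then show ?thesis using Suc by simp
  qed
  show ?thesis using a b by simp
qed

lemma rnd_unique:
  assumes "bnd w r < s" "s \<le> bnd w (Suc r)"
  shows "rnd bnd w s = r"
proof -
  have s1: "s \<ge> 1" using assms by simp
  note p = rnd_props[OF s1, of w]
  show ?thesis
  proof (rule ccontr)
    assume "rnd bnd w s \<noteq> r"
    then consider "rnd bnd w s < r" | "r < rnd bnd w s" by linarith
    then show False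
    proof cases
      case 1
      then have "bnd w (Suc (rnd bnd w s)) \<le> bnd w r" by (intro bnd_mono) simp
      then show False using p assms by simp
    next
      case 2
      then have "bnd w (Suc r) \<le> bnd w (rnd bnd w s)" by (intro bnd_mono) simp
      then show False using p assms by simp
    qed
  qed
qed

lemma rnd_mono:
  assumes "1 \<le> s" "s \<le> s'"
  shows "rnd bnd w s \<le> rnd bnd w s'"
proof (rule ccontr)
  assume "\<not> ?thesis"
  then have "Suc (rnd bnd w s') \<le> rnd bnd w s" by simp
  then have "bnd w (Suc (rnd bnd w s')) \<le> bnd w (rnd bnd w s)" by (rule bnd_mono)
  moreover note rnd_props[OF assms(1), of w] rnd_props[of s' w]
  ultimately show False using assms by simp
qed

lemma arm_in: "s \<in> {1..T} \<Longrightarrow> arm w s \<in> act w (rnd bnd w s)"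
  using rr_arm rnd_props by auto

lemma arm_in0: "s \<in> {1..T} \<Longrightarrow> arm w s \<in> act w 0"
  using arm_in act_mono[of 0] by blast

lemma same_round_inj:
  assumes "s \<in> {1..T}" "s' \<in> {1..T}" "rnd bnd w s = rnd bnd w s'" "arm w s = arm w s'"
  shows "s = s'"
proof -
  let ?r = "rnd bnd w s"
  have "s \<in> {bnd w ?r<..bnd w (Suc ?r)} \<inter> {..T}" using rnd_props[of s w] assms by auto
  moreover have "s' \<in> {bnd w ?r<..bnd w (Suc ?r)} \<inter> {..T}" using rnd_props[of s' w] assms by auto
  ultimately show ?thesis using rr_inj[of w ?r] assms(4) by (meson inj_onD)
qed

lemma round_full:
  assumes "bnd w (Suc j) \<le> T"
  shows "arm w ` {bnd w j<..bnd w (Suc j)} = act w j"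
proof (rule card_subset_eq)
  show "finite (act w j)" by (rule act_fin)
  show "arm w ` {bnd w j<..bnd w (Suc j)} \<subseteq> act w j" using rr_arm assms by auto
  have "inj_on (arm w) {bnd w j<..bnd w (Suc j)}"
    using rr_inj[of w j] assms by (simp add: Int_absorb2 subset_eq)
  then show "card (arm w ` {bnd w j<..bnd w (Suc j)}) = card (act w j)"
    using rr_bndS[of w j] by (simp add: card_image)
qed

lemma cnt_rnd:
  assumes s: "s \<in> {1..T}"
  shows "cnt arm w (s - 1) (arm w s) = rnd bnd w s"
proof -
  define i where "i = arm w s"
  define Q where "Q = {s' \<in> {1..s - 1}. arm w s' = i}"
  have QT: "Q \<subseteq> {1..T}" using s unfolding Q_def by auto
  have inj: "inj_on (rnd bnd w) Q"
    proof (rule inj_onI)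
    fix x y assume "x \<in> Q" "y \<in> Q" "rnd bnd w x = rnd bnd w y"
    then show "x = y" using same_round_inj[of x y w] s unfolding Q_def by auto
  qed
  have img: "rnd bnd w ` Q = {..<rnd bnd w s}"
  proof
    show "rnd bnd w ` Q \<subseteq> {..<rnd bnd w s}"
    proof
      fix x assume "x \<in> rnd bnd w ` Q"
      then obtain s' where s': "s' \<in> Q" "x = rnd bnd w s'" by blast
      have "x \<le> rnd bnd w s" using s' rnd_mono[of s' s w] unfolding Q_def by auto
      moreover have "x \<noteq> rnd bnd w s"
      proof
        assume "x = rnd bnd w s"
        have a1: "s' \<in> {1..T}" using QT s'(1) by blast
        have a2: "arm w s' = arm w s" using s'(1) unfolding Q_def i_def by simp
        have a3: "rnd bnd w s' = rnd bnd w s" using s'(2) \<open>x = rnd bnd w s\<close> by simp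
        have "s' = s" by (rule same_round_inj[OF a1 s a3 a2])
        then show False using s' unfolding Q_def by auto
      qed
      ultimately show "x \<in> {..<rnd bnd w s}" by simp
    qed
  next
    show "{..<rnd bnd w s} \<subseteq> rnd bnd w ` Q"
    proof
      fix j assume j: "j \<in> {..<rnd bnd w s}"
      have b1: "bnd w (Suc j) \<le> bnd w (rnd bnd w s)" using j by (intro bnd_mono) simp
      have b2: "bnd w (rnd bnd w s) < s" using rnd_props[of s w] s by simp
      have "i \<in> act w j" using arm_in[OF s, of w] act_mono[of j "rnd bnd w s" w] j
        unfolding i_def by auto
      have "bnd w (Suc j) \<le> T" using b1 b2 s by simp
      then have "i \<in> arm w ` {bnd w j<..bnd w (Suc j)}" using round_full[of w j] \<open>i \<in> act w j\<close> by simp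
      then obtain s' where s': "s' \<in> {bnd w j<..bnd w (Suc j)}" "arm w s' = i" by blast
      have "rnd bnd w s' = j" using s' by (intro rnd_unique) auto
      moreover have "s' \<in> Q" using s' b1 b2 unfolding Q_def by auto
      ultimately show "j \<in> rnd bnd w ` Q" by blast
    qed
  qed
  have "card Q = rnd bnd w s" using card_image[OF inj] img by simp
  then show ?thesis unfolding cnt_def Q_def i_def by simp
qed

lemma dly_rnd: "s \<in> {1..T} \<Longrightarrow> dly arm w s = w (arm w s, rnd bnd w s)"
  unfolding dly_def using cnt_rnd by simp


lemma Rmin_le:
  assumes "bnd w j < t"
  shows "Rmin act bnd w t \<le> card (act w j)"
proof -
  have fin: "finite {r. bnd w r < t}"
  proof (rule finite_subset[of _ "{..<t}"])
    show "{r. bnd w r < t} \<subseteq> {..<t}"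
    proof
      fix x assume "x \<in> {r. bnd w r < t}"
      then show "x \<in> {..<t}" using bnd_ge[of x w] by simp
    qed
  qed simp
  show ?thesis unfolding Rmin_def using fin assms by (intro Min_le) auto
qed

lemma Rmin_pos:
  assumes "1 \<le> t"
  shows "1 \<le> Rmin act bnd w t"
proof -
  have fin: "finite {r. bnd w r < t}"
  proof (rule finite_subset[of _ "{..<t}"])
    show "{r. bnd w r < t} \<subseteq> {..<t}"
    proof
      fix x assume "x \<in> {r. bnd w r < t}"
      then show "x \<in> {..<t}" using bnd_ge[of x w] by simp
    qed
  qed simp
  have ne: "0 \<in> {r. bnd w r < t}" using assms rr_bnd0 by simp
  have "Rmin act bnd w t \<in> (\<lambda>r. card (act w r)) ` {r. bnd w r < t}"
    unfolding Rmin_def using fin ne by (intro Min_in) auto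
  then show ?thesis using card_act by auto
qed

lemma Rmin_le0:
  assumes "1 \<le> t"
  shows "Rmin act bnd w t \<le> card (act w 0)"
  using Rmin_le[of w 0 t] assms rr_bnd0 by simp

lemma rnd_lt_T:
  assumes "t \<in> {1..T}"
  shows "rnd bnd w t < T"
  using rnd_props[of t w] bnd_ge[of "rnd bnd w t" w] assms by simp

lemma mcnt_bound:
  fixes w :: outcome
  assumes t: "t \<in> {1..T}"
  defines "r \<equiv> rnd bnd w t" and "R \<equiv> Rmin act bnd w t"
  shows "mcnt arm w t i \<le> 2 + card {k\<in>{..<T}. k + 2 \<le> r \<and> (r - Suc k) * R < w (i, k)}"
proof -
  define P where "P = {s \<in> {1..t}. arm w s = i \<and> s + dly arm w s \<ge> t}"
  define Z where "Z = {k\<in>{..<T}. k + 2 \<le> r \<and> (r - Suc k) * R < w (i, k)}"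
  have PT: "P \<subseteq> {1..T}" using t unfolding P_def by auto
  have inj: "inj_on (rnd bnd w) P"
  proof (rule inj_onI)
    fix x y assume xy: "x \<in> P" "y \<in> P" "rnd bnd w x = rnd bnd w y"
    have "x \<in> {1..T}" "y \<in> {1..T}" using xy PT by auto
    moreover have "arm w x = arm w y" using xy unfolding P_def by simp
    ultimately show "x = y" using same_round_inj xy(3) by blast
  qed
  have img: "rnd bnd w ` P \<subseteq> {r - 1, r} \<union> Z"
  proof
    fix k assume "k \<in> rnd bnd w ` P"
    then obtain s where sP: "s \<in> P" and k: "k = rnd bnd w s" by blast
    have sT: "s \<in> {1..T}" using sP PT by blast
    have st: "s \<le> t" using sP unfolding P_def by simp
    have kr: "k \<le> r" unfolding k r_def using rnd_mono[of s t w] sT st by simp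
    have ai: "arm w s = i" using sP unfolding P_def by simp
    have dl: "dly arm w s = w (i, k)" using dly_rnd[OF sT, of w] ai k by simp
    have tle: "t \<le> s + w (i, k)" using sP dl unfolding P_def by simp
    show "k \<in> {r - 1, r} \<union> Z"
    proof (cases "k + 2 \<le> r")
      case False then show ?thesis using kr by auto
    next
      case True
      have rt: "bnd w r < t" using rnd_props[of t w] t unfolding r_def by simp
      have low: "bnd w (Suc k) + (r - Suc k) * R \<le> bnd w r"
      proof (rule bnd_lower)
        show "Suc k \<le> r" using True by simp
        fix j assume "Suc k \<le> j" "j < r"
        then have "bnd w j \<le> bnd w r" by (intro bnd_mono) simp
        then show "R \<le> card (act w j)" unfolding R_def using rt by (intro Rmin_le) simp
      qed
      have "s \<le> bnd w (Suc k)" using rnd_props[of s w] sT k by simp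
      then have "(r - Suc k) * R < w (i, k)" using low rt tle by linarith
      moreover have "k < T" using kr rnd_lt_T[OF t, of w] unfolding r_def by simp
      ultimately show ?thesis using True unfolding Z_def by simp
    qed
  qed
  have finZ: "finite Z" unfolding Z_def by simp
  have "mcnt arm w t i = card P" unfolding mcnt_def P_def by simp
  also have "\<dots> = card (rnd bnd w ` P)" using card_image[OF inj] by simp
  also have "\<dots> \<le> card ({r - 1, r} \<union> Z)" using img finZ by (intro card_mono) auto
  also have "\<dots> \<le> card {r - 1, r} + card Z" by (rule card_Un_le)
  also have "\<dots> \<le> 2 + card Z" by (cases "r - 1 = r") auto
  finally show ?thesis unfolding Z_def .
qed

lemma cnt_pos_in:
  assumes "t \<le> T" "0 < cnt arm w t i"
  shows "i \<in> act w 0"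
proof -
  have "{s \<in> {1..t}. arm w s = i} \<noteq> {}" using assms(2) unfolding cnt_def by (metis card.empty less_irrefl)
  then obtain s where "s \<in> {1..t}" "arm w s = i" by blast
  then show ?thesis using arm_in0[of s w] assms(1) by auto
qed

lemma mcnt_out:
  assumes "t \<le> T" "i \<notin> act w 0"
  shows "mcnt arm w t i = 0"
proof -
  have "{s \<in> {1..t}. arm w s = i \<and> s + dly arm w s \<ge> t} = {}"
    using arm_in0[of _ w] assms by auto
  then show ?thesis unfolding mcnt_def by simp
qed

lemma big_round:
  assumes "T \<le> card (act w 0)" "t \<in> {1..T}"
  shows "rnd bnd w t = 0"
  using assms rr_bndS[of w 0] rr_bnd0[of w] by (intro rnd_unique) auto

lemma big_cnt:
  assumes "T \<le> card (act w 0)" "t \<le> T"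
  shows "cnt arm w t i \<le> 1"
proof -
  have "{1..t} \<subseteq> {bnd w 0<..bnd w (Suc 0)} \<inter> {..T}"
    using assms rr_bndS[of w 0] rr_bnd0[of w] by auto
  then have inj: "inj_on (arm w) {1..t}" using rr_inj[of w 0] inj_on_subset by blast
  have "card {s \<in> {1..t}. arm w s = i} \<le> Suc 0"
    by (subst card_le_Suc0_iff_eq) (use inj in \<open>auto dest: inj_onD\<close>)
  then show ?thesis unfolding cnt_def by simp
qed

end

lemma muhat_eq:
  "muhat D arm w t i = (\<Sum>k<cnt arm w t i. real (w (i, k)) / real D) / real (cnt arm w t i)"
proof -
  define Q where "Q = {s \<in> {1..t}. arm w s = i}"
  define \<phi> where "\<phi> s = cnt arm w (s - 1) i" for s
  have lt: "\<phi> s < \<phi> s'" if "s \<in> Q" "s' \<in> Q" "s < s'" for s s'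
  proof -
    have A: "{x \<in> {1..s-1}. arm w x = i} \<subseteq> {x \<in> {1..s'-1}. arm w x = i}"
      using that by auto
    have B: "s \<in> {x \<in> {1..s'-1}. arm w x = i}" "s \<notin> {x \<in> {1..s-1}. arm w x = i}"
      using that unfolding Q_def by auto
    have "{x \<in> {1..s-1}. arm w x = i} \<subset> {x \<in> {1..s'-1}. arm w x = i}"
      using A B by blast
    then show ?thesis unfolding \<phi>_def cnt_def by (intro psubset_card_mono) auto
  qed
  have inj: "inj_on \<phi> Q"
    by (intro inj_onI) (metis lt less_irrefl linorder_neqE_nat)
  have sub: "\<phi> ` Q \<subseteq> {..<card Q}"
  proof
    fix k assume "k \<in> \<phi> ` Q"
    then obtain s where s: "s \<in> Q" "k = \<phi> s" by blast
    have A: "{x \<in> {1..s-1}. arm w x = i} \<subseteq> Q" using s unfolding Q_def by auto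
    have B: "s \<in> Q" "s \<notin> {x \<in> {1..s-1}. arm w x = i}" using s by auto
    have "{x \<in> {1..s-1}. arm w x = i} \<subset> Q" using A B by blast
    then have "card {x \<in> {1..s-1}. arm w x = i} < card Q" by (intro psubset_card_mono) (auto simp: Q_def)
    then show "k \<in> {..<card Q}" using s unfolding \<phi>_def cnt_def by simp
  qed
  have img: "\<phi> ` Q = {..<card Q}"
    using sub card_image[OF inj] by (intro card_subset_eq) auto
  have bij: "bij_betw \<phi> Q {..<card Q}" using inj img by (simp add: bij_betw_def)
  have "(\<Sum>s\<in>Q. real (dly arm w s) / real D) = (\<Sum>s\<in>Q. real (w (i, \<phi> s)) / real D)"
    by (intro sum.cong) (auto simp: dly_def \<phi>_def Q_def)
  also have "\<dots> = (\<Sum>k<card Q. real (w (i, k)) / real D)"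
    using sum.reindex_bij_betw[OF bij, of "\<lambda>k. real (w (i, k)) / real D"] by simp
  finally show ?thesis unfolding muhat_def cnt_def Q_def by simp
qed


lemma supp_delay:
  assumes "w \<in> set_pmf (delay_space K T Dd)" "i < K" "k < T"
  shows "w (i, k) \<in> set_pmf (Dd i)"
  using assms unfolding delay_space_def by (auto simp: set_Pi_pmf PiE_dflt_def)

lemma comp_delay:
  assumes "i < K" "k < T"
  shows "map_pmf (\<lambda>w. w (i, k)) (delay_space K T Dd) = Dd i"
  using assms unfolding delay_space_def by (subst Pi_pmf_component) auto

lemma mu_bounds:
  assumes "D \<ge> 1" "set_pmf (Dd i) \<subseteq> {0..D}"
  shows "0 \<le> mu D Dd i" "mu D Dd i \<le> 1"
proof -
  show "0 \<le> mu D Dd i" unfolding mu_def by (intro Bochner_Integration.integral_nonneg_AE) auto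
  have "mu D Dd i \<le> measure_pmf.expectation (Dd i) (\<lambda>x. 1::real)" unfolding mu_def
  proof (intro integral_mono_AE)
    show "integrable (measure_pmf (Dd i)) (\<lambda>x. real x / real D)"
      using assms by (intro measure_pmf.integrable_const_bound[where B=1]) (auto intro!: AE_pmfI)
    show "AE x in measure_pmf (Dd i). real x / real D \<le> 1"
      using assms by (intro AE_pmfI) auto
  qed simp
  then show "mu D Dd i \<le> 1" by simp
qed

lemma hoeff:
  assumes D1: "D \<ge> 1" and i: "i < K" and n: "1 \<le> n" "n \<le> T"
    and supp: "set_pmf (Dd i) \<subseteq> {0..D}" and e: "\<epsilon> \<ge> 0"
  shows "measure_pmf.prob (delay_space K T Dd)
           {w. \<epsilon> \<le> \<bar>(\<Sum>k<n. real (w (i, k)) / real D) - real n * mu D Dd i\<bar>}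
         \<le> 2 * exp (-2 * \<epsilon>\<^sup>2 / real n)"
proof -
  let ?P = "delay_space K T Dd"
  let ?M = "measure_pmf ?P"
  define I where "I = (\<lambda>k. (i, k)) ` {..<n}"
  define X where "X = (\<lambda>(x::nat\<times>nat) (w::outcome). real (w x) / real D)"
  have IDom: "I \<subseteq> {..<K} \<times> {..<T}" using i n unfolding I_def by auto
  have injI: "inj_on (\<lambda>k. (i, k)) {..<n}" by (auto intro: inj_onI)
  have cardI: "card I = n" unfolding I_def using card_image[OF injI] by simp
  have ind0: "prob_space.indep_vars ?M (\<lambda>_. count_space UNIV) (\<lambda>x f. f x) ({..<K} \<times> {..<T})"
    unfolding delay_space_def by (rule indep_vars_Pi_pmf) simp
  have ind1: "prob_space.indep_vars ?M (\<lambda>_. count_space UNIV) (\<lambda>x f. f x) I"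
    by (rule prob_space.indep_vars_subset[OF measure_pmf.prob_space_axioms ind0 IDom])
  have ind: "prob_space.indep_vars ?M (\<lambda>_. borel) X I"
    using prob_space.indep_vars_compose2[OF measure_pmf.prob_space_axioms ind1,
        of "\<lambda>_ v. real v / real D" "\<lambda>_. borel"]
    unfolding X_def by simp
  have EX: "measure_pmf.expectation ?P (X x) = mu D Dd i" if xI: "x \<in> I" for x
  proof -
    obtain k where k: "x = (i, k)" "k < n" using xI unfolding I_def by blast
    have "measure_pmf.expectation ?P (X x)
          = measure_pmf.expectation ?P (\<lambda>w. (\<lambda>v. real v / real D) (w (i, k)))"
      unfolding X_def k by simp
    also have "\<dots> = measure_pmf.expectation (map_pmf (\<lambda>w. w (i, k)) ?P) (\<lambda>v. real v / real D)"
      by simp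
    also have "\<dots> = mu D Dd i" using comp_delay[of i K k T Dd] i k n unfolding mu_def by simp
    finally show ?thesis .
  qed
  interpret H: Hoeffding_ineq ?M I X "\<lambda>_. 0" "\<lambda>_. 1" "\<Sum>x\<in>I. measure_pmf.expectation ?P (X x)"
  proof unfold_locales
    show "finite I" unfolding I_def by simp
    show "prob_space.indep_vars ?M (\<lambda>_. borel) X I" by (rule ind)
    fix x assume "x \<in> I"
    then obtain k where k: "x = (i, k)" "k < n" unfolding I_def by blast
    show "AE w in ?M. X x w \<in> {0..1}"
    proof (rule AE_pmfI)
      fix w assume "w \<in> set_pmf ?P"
      then have "w (i, k) \<in> set_pmf (Dd i)" using supp_delay[of w K T Dd i k] i k n by simp
      then show "X x w \<in> {0..1}" using supp D1 unfolding X_def k by auto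
    qed
  qed simp
  have mu_eq: "(\<Sum>x\<in>I. measure_pmf.expectation ?P (X x)) = real n * mu D Dd i"
    using EX cardI by simp
  have sumX: "(\<Sum>x\<in>I. X x w) = (\<Sum>k<n. real (w (i, k)) / real D)" for w
    unfolding I_def X_def using sum.reindex[OF injI] by simp
  have "measure_pmf.prob ?P {w \<in> space ?M. \<epsilon> \<le> \<bar>(\<Sum>x\<in>I. X x w) - (\<Sum>x\<in>I. measure_pmf.expectation ?P (X x))\<bar>}
        \<le> 2 * exp (-2 * \<epsilon>\<^sup>2 / (\<Sum>x\<in>I. (1 - 0)\<^sup>2))"
    by (rule H.Hoeffding_ineq_abs_ge[OF e]) (use cardI n in simp)
  then show ?thesis using cardI unfolding mu_eq sumX by simp
qed


lemma card_thr_le: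
  assumes R: "R \<ge> (1::nat)"
  shows "real (card {k\<in>{..<T}. k + 2 \<le> r \<and> (r - Suc k) * R < v}) \<le> real v / real R"
proof -
  define S where "S = {k\<in>{..<T}. k + 2 \<le> r \<and> (r - Suc k) * R < v}"
  have inj: "inj_on (\<lambda>k. r - Suc k) S" unfolding S_def by (intro inj_onI) auto
  have sub: "(\<lambda>k. r - Suc k) ` S \<subseteq> {1..v div R}"
  proof
    fix j assume "j \<in> (\<lambda>k. r - Suc k) ` S"
    then obtain k where k: "k \<in> S" "j = r - Suc k" by blast
    have "j * R < v" "1 \<le> j" using k unfolding S_def by auto
    then have "j \<le> v div R" using R by (metis div_le_mono less_imp_le_nat nonzero_mult_div_cancel_right not_one_le_zero)
    then show "j \<in> {1..v div R}" using \<open>1 \<le> j\<close> by simp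
  qed
  have "card S = card ((\<lambda>k. r - Suc k) ` S)" using card_image[OF inj] by simp
  also have "\<dots> \<le> card {1..v div R}" using sub by (intro card_mono) auto
  also have "\<dots> = v div R" by simp
  finally have "real (card S) \<le> real (v div R)" by simp
  also have "\<dots> \<le> real v / real R" by (rule of_nat_div_le_of_nat)
  finally show ?thesis unfolding S_def .
qed

lemma chern:
  assumes D1: "D \<ge> 1" and i: "i < K" and supp: "set_pmf (Dd i) \<subseteq> {0..D}"
    and R: "R \<ge> 1" and a: "a \<ge> 0"
  shows "measure_pmf.prob (delay_space K T Dd)
     {w. 2 * dmean D Dd i / real R + a < real (card {k\<in>{..<T}. k + 2 \<le> r \<and> (r - Suc k) * R < w (i, k)})}
     \<le> 2 powr (-a)"
proof -
  let ?P = "delay_space K T Dd"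
  let ?Dom = "{..<K} \<times> {..<T}"
  define cond where "cond k v \<longleftrightarrow> k + 2 \<le> r \<and> (r - Suc k) * R < v" for k v :: nat
  define Z where "Z w = {k\<in>{..<T}. cond k (w (i, k))}" for w :: outcome
  define q where "q x v = (if fst x = i \<and> cond (snd x) v then 1 else 0 :: real)" for x :: "nat \<times> nat" and v
  define f where "f x v = 1 + q x v" for x v
  define g where "g w = (\<Prod>x\<in>?Dom. f x (w x))" for w :: outcome
  define m where "m = dmean D Dd i / real R"
  have finDom: "finite ?Dom" by simp
  have g_eq: "g w = 2 ^ card (Z w)" for w
  proof -
    have "g w = (\<Prod>x\<in>?Dom. if fst x = i \<and> cond (snd x) (w x) then 2 else 1)"
      unfolding g_def f_def q_def by (intro prod.cong) auto
    also have "\<dots> = (\<Prod>x\<in>?Dom \<inter> {x. fst x = i \<and> cond (snd x) (w x)}. 2) * (\<Prod>x\<in>?Dom \<inter> - {x. fst x = i \<and> cond (snd x) (w x)}. 1)"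
      by (rule prod.If_cases) simp
    also have "\<dots> = 2 ^ card (?Dom \<inter> {x. fst x = i \<and> cond (snd x) (w x)})" by simp
    also have "?Dom \<inter> {x. fst x = i \<and> cond (snd x) (w x)} = (\<lambda>k. (i, k)) ` Z w"
      unfolding Z_def using i by auto
    also have "card \<dots> = card (Z w)" by (rule card_image) (auto intro: inj_onI)
    finally show ?thesis .
  qed
  have q01: "0 \<le> q x v" "q x v \<le> 1" for x v unfolding q_def by auto
  have intq: "integrable (measure_pmf p) (q x)" for p x
    by (intro measure_pmf.integrable_const_bound[where B=1]) (auto simp: q_def)
  have Eg: "measure_pmf.expectation ?P g = (\<Prod>x\<in>?Dom. measure_pmf.expectation ((\<lambda>(i,k). Dd i) x) (f x))"
    unfolding g_def delay_space_def
  proof (rule expectation_prod_Pi_pmf)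
    fix x show "integrable (measure_pmf ((\<lambda>(i,k). Dd i) x)) (f x)"
      unfolding f_def using intq by simp
    fix y show "0 \<le> f x y" unfolding f_def using q01[of x y] by simp
  qed simp
  have Ef: "measure_pmf.expectation ((\<lambda>(i,k). Dd i) x) (f x) \<le> exp (measure_pmf.expectation (Dd i) (q x))" for x
  proof -
    obtain j k where x: "x = (j, k)" by fastforce
    have "measure_pmf.expectation (Dd j) (q x) = measure_pmf.expectation (Dd i) (q x)"
    proof (cases "j = i")
      case False
      then have "q x = (\<lambda>_. 0)" unfolding q_def x by (intro ext) simp
      then show ?thesis by simp
    qed simp
    moreover have "measure_pmf.expectation (Dd j) (f x) = 1 + measure_pmf.expectation (Dd j) (q x)"
      unfolding f_def using intq by simp
    ultimately show ?thesis unfolding x using exp_ge_add_one_self by simp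
  qed
  have "measure_pmf.expectation ?P g \<le> (\<Prod>x\<in>?Dom. exp (measure_pmf.expectation (Dd i) (q x)))"
    unfolding Eg
  proof (rule prod_mono)
    fix x assume "x \<in> ?Dom"
    have "0 \<le> measure_pmf.expectation ((\<lambda>(i,k). Dd i) x) (f x)"
      unfolding f_def using q01 by (intro Bochner_Integration.integral_nonneg_AE) (auto intro!: add_nonneg_nonneg)
    then show "0 \<le> measure_pmf.expectation ((\<lambda>(i,k). Dd i) x) (f x) \<and>
      measure_pmf.expectation ((\<lambda>(i,k). Dd i) x) (f x) \<le> exp (measure_pmf.expectation (Dd i) (q x))"
      using Ef by simp
  qed
  also have "\<dots> = exp (\<Sum>x\<in>?Dom. measure_pmf.expectation (Dd i) (q x))" by (simp add: exp_sum)
  finally have Eg1: "measure_pmf.expectation ?P g \<le> exp (\<Sum>x\<in>?Dom. measure_pmf.expectation (Dd i) (q x))" .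
  have "(\<Sum>x\<in>?Dom. measure_pmf.expectation (Dd i) (q x)) = measure_pmf.expectation (Dd i) (\<lambda>v. \<Sum>x\<in>?Dom. q x v)"
    using intq by (subst Bochner_Integration.integral_sum) auto
  also have "\<dots> \<le> measure_pmf.expectation (Dd i) (\<lambda>v. real v / real R)"
  proof (rule integral_mono_AE)
    show "integrable (measure_pmf (Dd i)) (\<lambda>v. \<Sum>x\<in>?Dom. q x v)" using intq by simp
    show "integrable (measure_pmf (Dd i)) (\<lambda>v. real v / real R)"
    proof (rule measure_pmf.integrable_const_bound[where B="real D"])
      show "AE v in measure_pmf (Dd i). norm (real v / real R) \<le> real D"
      proof (rule AE_pmfI)
        fix v assume "v \<in> set_pmf (Dd i)"
        then have "v \<le> D" using supp by auto
        moreover have "real v / real R \<le> real v" using R by (simp add: divide_le_eq mult_le_cancel_left1)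
        ultimately show "norm (real v / real R) \<le> real D" by simp
      qed
    qed simp
    show "AE v in measure_pmf (Dd i). (\<Sum>x\<in>?Dom. q x v) \<le> real v / real R"
    proof (rule AE_pmfI)
      fix v
      have "(\<Sum>x\<in>?Dom. q x v) = (\<Sum>x\<in>?Dom \<inter> {x. fst x = i \<and> cond (snd x) v}. 1)"
        unfolding q_def by (subst sum.If_cases) auto
      also have "\<dots> = real (card (?Dom \<inter> {x. fst x = i \<and> cond (snd x) v}))" by simp
      also have "?Dom \<inter> {x. fst x = i \<and> cond (snd x) v} = (\<lambda>k. (i, k)) ` {k\<in>{..<T}. cond k v}"
        using i by auto
      also have "card \<dots> = card {k\<in>{..<T}. cond k v}" by (rule card_image) (auto intro: inj_onI)
      also have "real \<dots> \<le> real v / real R" unfolding cond_def by (rule card_thr_le[OF R])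
      finally show "(\<Sum>x\<in>?Dom. q x v) \<le> real v / real R" .
    qed
  qed
  also have "measure_pmf.expectation (Dd i) (\<lambda>v. real v / real R) = m"
  proof -
    have "measure_pmf.expectation (Dd i) (\<lambda>v. real v / real R)
        = measure_pmf.expectation (Dd i) (\<lambda>v. real D * (real v / real D)) / real R"
      using D1 by simp
    also have "\<dots> = real D * mu D Dd i / real R" unfolding mu_def by simp
    finally show ?thesis unfolding m_def dmean_def .
  qed
  finally have "(\<Sum>x\<in>?Dom. measure_pmf.expectation (Dd i) (q x)) \<le> m" .
  then have Eg_le: "measure_pmf.expectation ?P g \<le> exp m" using Eg1 by (meson exp_le_cancel_iff order_trans)
  have m0: "0 \<le> m" unfolding m_def dmean_def using mu_bounds(1)[of D Dd i, OF D1 supp] by simp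
  have gnn: "0 \<le> g w" for w unfolding g_eq by simp
  have intg: "integrable (measure_pmf ?P) g"
  proof (rule measure_pmf.integrable_const_bound[where B="2 ^ T"])
    show "AE x in measure_pmf ?P. norm (g x) \<le> 2 ^ T"
    proof (rule AE_pmfI)
      fix w
      have "card (Z w) \<le> T" unfolding Z_def by (rule order_trans[OF card_mono[of "{..<T}"]]) auto
      then show "norm (g w) \<le> 2 ^ T" unfolding g_eq by simp
    qed
  qed simp
  have "measure_pmf.prob ?P {w. 2 * m + a < real (card (Z w))}
        \<le> measure_pmf.prob ?P {w \<in> space (measure_pmf ?P). 2 powr (2 * m + a) \<le> g w}"
  proof (rule measure_pmf.finite_measure_mono)
    show "{w. 2 * m + a < real (card (Z w))} \<subseteq> {w \<in> space (measure_pmf ?P). 2 powr (2 * m + a) \<le> g w}"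
    proof safe
      fix w assume "2 * m + a < real (card (Z w))"
      then have "2 powr (2 * m + a) \<le> 2 powr real (card (Z w))" by (intro powr_mono) auto
      then show "2 powr (2 * m + a) \<le> g w" unfolding g_eq by (simp add: powr_realpow)
    qed simp
  qed simp
  also have "\<dots> \<le> measure_pmf.expectation ?P g / 2 powr (2 * m + a)"
    by (rule integral_Markov_inequality_measure[OF intg, of UNIV]) (auto simp: gnn)
  also have "\<dots> \<le> exp m / 2 powr (2 * m + a)"
    using Eg_le by (intro divide_right_mono) auto
  also have "\<dots> \<le> 2 powr (-a)"
  proof -
    have l2: "1 \<le> 2 * ln (2::real)" using ln2_ge_two_thirds by simp
    have "exp m / 2 powr (2 * m + a) = exp (m - (2 * m + a) * ln 2)"
      by (simp add: powr_def exp_diff)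
    also have "\<dots> \<le> exp (- a * ln 2)"
    proof (subst exp_le_cancel_iff)
      have "m * 1 \<le> m * (2 * ln 2)" by (rule mult_left_mono[OF l2 m0])
      then show "m - (2 * m + a) * ln 2 \<le> - a * ln 2" by (simp add: algebra_simps)
    qed
    also have "\<dots> = 2 powr (-a)" by (simp add: powr_def)
    finally show ?thesis .
  qed
  finally show ?thesis unfolding m_def Z_def cond_def by simp
qed


lemma hoeff_arith:
  assumes T: "T \<ge> (1::nat)" and n: "n \<ge> (1::nat)"
  shows "2 * exp (-2 * (real n * sqrt (2 * ln (real T) / real n))\<^sup>2 / real n) = 2 / (real T)^4"
proof -
  have l: "0 \<le> ln (real T)" using T by simp
  have "(real n * sqrt (2 * ln (real T) / real n))\<^sup>2 = (real n)\<^sup>2 * (2 * ln (real T) / real n)"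
    using l n by (simp add: power_mult_distrib)
  then have "-2 * (real n * sqrt (2 * ln (real T) / real n))\<^sup>2 / real n = -4 * ln (real T)"
    using n by (simp add: power2_eq_square field_simps)
  then have "exp (-2 * (real n * sqrt (2 * ln (real T) / real n))\<^sup>2 / real n) = exp (ln (real T) * (-4))"
    by (simp add: mult.commute)
  also have "\<dots> = (real T) powr (-4)" using T by (simp add: powr_def)
  also have "\<dots> = 1 / (real T)^4" using T by (simp add: powr_minus powr_realpow divide_inverse)
  finally show ?thesis by simp
qed

lemma chern_arith:
  assumes T: "T \<ge> (1::nat)"
  shows "2 powr (- (16 * ln (real T))) \<le> 1 / (real T)^5"
proof -
  have l: "0 \<le> ln (real T)" using T by simp
  have l2: "5 \<le> 16 * ln (2::real)" using ln2_ge_two_thirds by simp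
  have "2 powr (- (16 * ln (real T))) = exp (- (16 * ln (real T)) * ln 2)" by (simp add: powr_def)
  also have "\<dots> \<le> exp (ln (real T) * (-5))"
  proof (subst exp_le_cancel_iff)
    have "ln (real T) * 5 \<le> ln (real T) * (16 * ln 2)" by (rule mult_left_mono[OF l2 l])
    then show "- (16 * ln (real T)) * ln 2 \<le> ln (real T) * (-5)" by (simp add: algebra_simps)
  qed
  also have "\<dots> = (real T) powr (-5)" using T by (simp add: powr_def)
  also have "\<dots> = 1 / (real T)^5" using T by (simp add: powr_minus powr_realpow divide_inverse)
  finally show ?thesis .
qed

theorem lemma2:
  fixes K T D :: nat
    and Dd :: "nat \<Rightarrow> nat pmf"
    and arm :: "outcome \<Rightarrow> nat \<Rightarrow> nat"
    and act :: "outcome \<Rightarrow> nat \<Rightarrow> nat set"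
    and bnd :: "outcome \<Rightarrow> nat \<Rightarrow> nat"
  assumes "K \<ge> 1" and "T \<ge> 1" and "D \<ge> 1"
    and "\<And>i. i < K \<Longrightarrow> set_pmf (Dd i) \<subseteq> {0..D}"
    and "round_robin K T arm act bnd"
  shows "measure_pmf.prob (delay_space K T Dd) (good_event K T D Dd arm act bnd)
           \<ge> 1 - 3 / (real T)^2"
proof -
  note T1 = assms(2) and D1 = assms(3) and supp = assms(4) and rr = assms(5)
  let ?P = "delay_space K T Dd"
  let ?G = "good_event K T D Dd arm act bnd"
  define A0 where "A0 = act (\<lambda>_. 0) 0"
  have A0w: "act w 0 = A0" for w unfolding A0_def by (rule act0_const[OF rr T1])
  have A0K: "A0 \<subseteq> {..<K}" using rr_act0[OF rr T1] A0w by blast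
  have finA0: "finite A0" using A0K finite_subset by blast
  have dm0: "0 \<le> dmean D Dd i" if "i < K" for i
    unfolding dmean_def using mu_bounds(1)[of D Dd i, OF D1 supp[OF that]] by simp
  have prob_set: "measure_pmf.prob ?P (set_pmf ?P) = 1"
    using measure_Int_set_pmf[of ?P UNIV] by simp
  show ?thesis
  proof (cases "T = 1")
    case True
    have "0 \<le> measure_pmf.prob ?P ?G" by simp
    moreover have "1 - 3 / (real T)^2 = -2" using True by simp
    ultimately show ?thesis by linarith
  next
    case False
    then have T2: "T \<ge> 2" using T1 by simp
    have lnT: "0 \<le> ln (real T)" using T1 by simp
    show ?thesis
    proof (cases "T \<le> card A0")
      case big: True
      have "set_pmf ?P \<subseteq> ?G"
      proof
        fix w assume w: "w \<in> set_pmf ?P"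
        show "w \<in> ?G" unfolding good_event_def
        proof (intro CollectI ballI allI impI conjI)
          fix t i assume t: "t \<in> {1..T}" and i: "i < K"
          have r0: "rnd bnd w t = 0" using big_round[OF rr T1 _ t] big A0w by simp
          have "mcnt arm w t i \<le> 2 + card {k\<in>{..<T}. k + 2 \<le> 0 \<and> (0 - Suc k) * Rmin act bnd w t < w (i, k)}"
            using mcnt_bound[OF rr T1 t, where w=w and i=i] r0 by simp
          then have "mcnt arm w t i \<le> 2" by simp
          moreover have "0 \<le> 2 * dmean D Dd i / real (Rmin act bnd w t)" using dm0[OF i] by simp
          ultimately show "real (mcnt arm w t i) \<le> 2 * dmean D Dd i / real (Rmin act bnd w t) + 16 * ln (real T) + 2"
            using lnT by linarith
        next
          fix t i assume t: "t \<in> {1..T}" and i: "i < K" and c: "0 < cnt arm w t i"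
          have "cnt arm w t i \<le> 1" using big_cnt[OF rr T1, of w t i] big A0w t by simp
          then have c1: "cnt arm w t i = 1" using c by simp
          have mh: "muhat D arm w t i = real (w (i, 0)) / real D" unfolding muhat_eq c1 by simp
          have "w (i, 0) \<in> set_pmf (Dd i)" using supp_delay[OF w i] T1 by simp
          then have "w (i, 0) \<le> D" using supp[OF i] by auto
          then have "real (w (i, 0)) / real D \<le> 1" "0 \<le> real (w (i, 0)) / real D" using D1 by auto
          moreover note mu_bounds[of D Dd i, OF D1 supp[OF i]]
          ultimately have "\<bar>mu D Dd i - muhat D arm w t i\<bar> \<le> 1" unfolding mh by linarith
          also have "1 \<le> sqrt (2 * ln (real T) / real (cnt arm w t i))"
          proof -
            have "ln 2 \<le> ln (real T)" using T2 by simp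
            then have "1 \<le> 2 * ln (real T)" using ln2_ge_two_thirds by linarith
            then show ?thesis unfolding c1 by simp
          qed
          finally show "\<bar>mu D Dd i - muhat D arm w t i\<bar> \<le> sqrt (2 * ln (real T) / real (cnt arm w t i))" .
        qed
      qed
      then have "1 \<le> measure_pmf.prob ?P ?G"
        using prob_set measure_pmf.finite_measure_mono[of "set_pmf ?P" ?G ?P] by simp
      moreover have "0 \<le> 3 / (real T)^2" by simp
      ultimately show ?thesis by linarith
    next
      case small: False
      define HB where "HB = (\<lambda>(i, n). {w. real n * sqrt (2 * ln (real T) / real n)
             \<le> \<bar>(\<Sum>k<n. real (w (i, k)) / real D) - real n * mu D Dd i\<bar>})"
      define CB where "CB = (\<lambda>(i, r, R). {w. 2 * dmean D Dd i / real R + 16 * ln (real T)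
             < real (card {k\<in>{..<T}. k + 2 \<le> r \<and> (r - Suc k) * R < w (i, k)})})"
      define IH where "IH = A0 \<times> {1..T}"
      define IC where "IC = A0 \<times> {..<T} \<times> {1..T}"
      define B where "B = (\<Union>x\<in>IH. HB x) \<union> (\<Union>y\<in>IC. CB y)"
      have cA0: "card A0 \<le> T" using small by simp
      have pH: "measure_pmf.prob ?P (HB x) \<le> 2 / (real T)^4" if xI: "x \<in> IH" for x
      proof -
        obtain i n where x: "x = (i, n)" "i \<in> A0" "n \<in> {1..T}" using xI unfolding IH_def by blast
        have i: "i < K" using x A0K by blast
        have "measure_pmf.prob ?P (HB x) \<le> 2 * exp (-2 * (real n * sqrt (2 * ln (real T) / real n))\<^sup>2 / real n)"
          unfolding x HB_def prod.case using x(3) lnT D1 i supp[OF i] by (intro hoeff[of D i K n T Dd]) auto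
        also have "\<dots> = 2 / (real T)^4" using x(3) T1 by (intro hoeff_arith) auto
        finally show ?thesis .
      qed
      have pC: "measure_pmf.prob ?P (CB y) \<le> 1 / (real T)^5" if yI: "y \<in> IC" for y
      proof -
        obtain i r R where y: "y = (i, r, R)" "i \<in> A0" "R \<in> {1..T}" using yI unfolding IC_def by blast
        have i: "i < K" using y A0K by blast
        have "measure_pmf.prob ?P (CB y) \<le> 2 powr (- (16 * ln (real T)))"
          unfolding y CB_def prod.case using y(3) lnT D1 i supp[OF i] by (intro chern[of D i K Dd R]) auto
        also have "\<dots> \<le> 1 / (real T)^5" by (rule chern_arith[OF T1])
        finally show ?thesis .
      qed
      have finIH: "finite IH" unfolding IH_def using finA0 by simp
      have finIC: "finite IC" unfolding IC_def using finA0 by simp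
      have u0: "measure_pmf.prob ?P B \<le> measure_pmf.prob ?P (\<Union>x\<in>IH. HB x) + measure_pmf.prob ?P (\<Union>y\<in>IC. CB y)"
        unfolding B_def by (rule measure_Un_le) auto
      have "measure_pmf.prob ?P (\<Union>x\<in>IH. HB x) \<le> (\<Sum>x\<in>IH. measure_pmf.prob ?P (HB x))"
        by (rule measure_pmf.finite_measure_subadditive_finite[OF finIH]) auto
      also have "\<dots> \<le> (\<Sum>x\<in>IH. 2 / (real T)^4)" by (rule sum_mono) (rule pH)
      finally have u1: "measure_pmf.prob ?P (\<Union>x\<in>IH. HB x) \<le> (\<Sum>x\<in>IH. 2 / (real T)^4)" .
      have "measure_pmf.prob ?P (\<Union>y\<in>IC. CB y) \<le> (\<Sum>y\<in>IC. measure_pmf.prob ?P (CB y))"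
        by (rule measure_pmf.finite_measure_subadditive_finite[OF finIC]) auto
      also have "\<dots> \<le> (\<Sum>y\<in>IC. 1 / (real T)^5)" by (rule sum_mono) (rule pC)
      finally have u2: "measure_pmf.prob ?P (\<Union>y\<in>IC. CB y) \<le> (\<Sum>y\<in>IC. 1 / (real T)^5)" .
      have "(\<Sum>x\<in>IH. 2 / (real T)^4) + (\<Sum>y\<in>IC. 1 / (real T)^5)
                 = real (card A0) * real T * (2 / (real T)^4) + real (card A0) * real T * real T * (1 / (real T)^5)"
        unfolding IH_def IC_def by (simp add: card_cartesian_product)
      also have "\<dots> \<le> real T * real T * (2 / (real T)^4) + real T * real T * real T * (1 / (real T)^5)"
        using cA0 by (intro add_mono mult_right_mono) auto
      also have "\<dots> = 3 / (real T)^2" using T1 by (simp add: field_simps power_def)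
      finally have u3: "(\<Sum>x\<in>IH. 2 / (real T)^4) + (\<Sum>y\<in>IC. 1 / (real T)^5) \<le> 3 / (real T)^2" .
      have pB: "measure_pmf.prob ?P B \<le> 3 / (real T)^2" using u0 u1 u2 u3 by linarith
      have sub: "set_pmf ?P - B \<subseteq> ?G"
      proof
        fix w assume wB: "w \<in> set_pmf ?P - B"
        then have w: "w \<in> set_pmf ?P" by simp
        show "w \<in> ?G" unfolding good_event_def
        proof (intro CollectI ballI allI impI conjI)
          fix t i assume t: "t \<in> {1..T}" and i: "i < K"
          define r where "r = rnd bnd w t"
          define R where "R = Rmin act bnd w t"
          have bnd_nonneg: "0 \<le> 2 * dmean D Dd i / real R" using dm0[OF i] by simp
          show "real (mcnt arm w t i) \<le> 2 * dmean D Dd i / real (Rmin act bnd w t) + 16 * ln (real T) + 2"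
          proof (cases "i \<in> A0")
            case False
            then have "mcnt arm w t i = 0" using mcnt_out[OF rr T1, where w=w and t=t and i=i] t A0w by simp
            then show ?thesis using bnd_nonneg lnT unfolding R_def by simp
          next
            case True
            have rT: "r < T" unfolding r_def by (rule rnd_lt_T[OF rr T1 t])
            have R1: "1 \<le> R" unfolding R_def using Rmin_pos[OF rr T1, of t w] t by simp
            have RT: "R \<le> T" unfolding R_def using Rmin_le0[OF rr T1, of t w] t A0w cA0 by simp
            have "(i, r, R) \<in> IC" unfolding IC_def using True rT R1 RT by simp
            then have "w \<notin> CB (i, r, R)" using wB unfolding B_def by blast
            then have "real (card {k\<in>{..<T}. k + 2 \<le> r \<and> (r - Suc k) * R < w (i, k)}) \<le> 2 * dmean D Dd i / real R + 16 * ln (real T)"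
              unfolding CB_def by simp
            moreover have "mcnt arm w t i \<le> 2 + card {k\<in>{..<T}. k + 2 \<le> r \<and> (r - Suc k) * R < w (i, k)}"
              unfolding r_def R_def by (rule mcnt_bound[OF rr T1 t])
            ultimately show ?thesis unfolding R_def by linarith
          qed
        next
          fix t i assume t: "t \<in> {1..T}" and i: "i < K" and c: "0 < cnt arm w t i"
          define n where "n = cnt arm w t i"
          have iA: "i \<in> A0" using cnt_pos_in[OF rr T1, of t w i] t c A0w by simp
          have nt: "n \<le> t" unfolding n_def cnt_def by (rule order_trans[OF card_mono[of "{1..t}"]]) auto
          have n1: "1 \<le> n" using c unfolding n_def by simp
          have "(i, n) \<in> IH" unfolding IH_def using iA n1 nt t by simp
          then have "w \<notin> HB (i, n)" using wB unfolding B_def by blast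
          then have lt: "\<bar>(\<Sum>k<n. real (w (i, k)) / real D) - real n * mu D Dd i\<bar> < real n * sqrt (2 * ln (real T) / real n)"
            unfolding HB_def by simp
          have "\<bar>mu D Dd i - muhat D arm w t i\<bar> = \<bar>(\<Sum>k<n. real (w (i, k)) / real D) - real n * mu D Dd i\<bar> / real n"
          proof -
            have "mu D Dd i - muhat D arm w t i = - (((\<Sum>k<n. real (w (i, k)) / real D) - real n * mu D Dd i) / real n)"
              unfolding muhat_eq n_def[symmetric] using n1 by (simp add: field_simps)
            then show ?thesis using n1 by (simp add: abs_minus_cancel)
          qed
          also have "\<dots> < sqrt (2 * ln (real T) / real n)" using lt n1 by (simp add: divide_less_eq mult.commute)
          finally show "\<bar>mu D Dd i - muhat D arm w t i\<bar> \<le> sqrt (2 * ln (real T) / real (cnt arm w t i))"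
            unfolding n_def by simp
        qed
      qed
      have c1: "measure_pmf.prob ?P (UNIV - B) = 1 - measure_pmf.prob ?P B"
        using measure_pmf.prob_compl[of B ?P] by simp
      have c2: "measure_pmf.prob ?P (UNIV - B) = measure_pmf.prob ?P ((UNIV - B) \<inter> set_pmf ?P)"
        by (rule measure_Int_set_pmf[symmetric])
      have c3: "measure_pmf.prob ?P ((UNIV - B) \<inter> set_pmf ?P) \<le> measure_pmf.prob ?P ?G"
        using sub by (intro measure_pmf.finite_measure_mono) auto
      show ?thesis using c1 c2 c3 pB by linarith
    qed
  qed
qed

end
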